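(* Let $G=(V,\mathcal E,w)$ be an undirected, connected, weighted graph, and let $\tau=0$ (no time-delay). Fix one of the six uncertainty structures listed in the context. For $\alpha>0$, let $\eta_i(\alpha)$ (resp. $\nu_e(\alpha)$) denote the agent (resp. link) centrality indices of the network obtained by replacing every weight $w(e)$ by $\alpha w(e)$. Then for all $\alpha>0$: - for all agents $i,j$ (agent-associated structures), $\eta_i(\alpha)>\eta_j(\alpha)$ if and only if $\eta_i(1)>\eta_j(1)$; - for all links $e,f$ (link-associated structures), $\nu_e(\alpha)>\nu_f(\alpha)$ if and only if $\nu_e(1)>\nu_f(1)$. That is, the order of precedence of agents and the ranking of links are invariant under uniform scaling of all link weights.
   Context: Graph matrices: - $E$ is the signed incidence matrix (arbitrary orientation) and $W=\mathrm{diag}(w(e))$. - $L=EWE^T$ is the Laplacian, $\Delta$ the diagonal weighted-degree matrix, $A=\Delta-L$ the weighted adjacency matrix. - $M_n=I_n-\frac1n\mathbf1\mathbf1^T$. The network is $$\dot x(t)=-L\,x(t-\tau)+B\,\xi(t),\qquad y=M_nx,$$ with $\xi$ a vector of mutually independent zero-mean Gaussian white noises with intensities $\sigma_k^2$. The six uncertainty structures are: - agent-associated (noises indexed by agents): dynamics noise $B=I_n$; sensor noise $B=L$; receiver noise $B=\Delta$; emitter noise $B=A$; - link-associated (noises indexed by links): communication noise $B=EW$; measurement noise $B=-E$. In each case $B$ is computed from the (scaled) weights. The performance is $$\rho_{ss}=\lim_{t\to\infty}\mathbb E[y^Ty]=\frac1{2\pi}\int\mathrm{Tr}[G^HG]d\omega,\qquad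 G(s)=M_n(sI+e^{-\tau s}L)^{-1}B\,\mathrm{diag}(\sigma_k).$$ Centralities are $\eta_i=\partial\rho_{ss}/\partial\sigma_i^2$ (agent noise) and $\nu_e=\partial\rho_{ss}/\partial\sigma_e^2$ (link noise). *)

theory Defs
  imports "HOL-Analysis.Analysis"
begin

section \<open>Graphs: vertices = finite type 'v, edges = finite type 'e,
  each edge e oriented (arbitrarily) from tail e to head e\<close>

definition simple_undirected_graph :: "('e \<Rightarrow> 'v) \<Rightarrow> ('e \<Rightarrow> 'v) \<Rightarrow> bool" where
  "simple_undirected_graph head tail \<longleftrightarrow>
     (\<forall>e. head e \<noteq> tail e) \<and>
     (\<forall>e f. e \<noteq> f \<longrightarrow> {head e, tail e} \<noteq> {head f, tail f})"

definition adjacent :: "('e \<Rightarrow> 'v) \<Rightarrow> ('e \<Rightarrow> 'v) \<Rightarrow> 'v \<Rightarrow> 'v \<Rightarrow> bool" where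
  "adjacent head tail u v \<longleftrightarrow> (\<exists>e. (head e = u \<and> tail e = v) \<or> (head e = v \<and> tail e = u))"

definition connected_graph :: "('e \<Rightarrow> 'v) \<Rightarrow> ('e \<Rightarrow> 'v) \<Rightarrow> bool" where
  "connected_graph head tail \<longleftrightarrow> (\<forall>u v. (adjacent head tail)\<^sup>*\<^sup>* u v)"

definition diag_mat :: "('n \<Rightarrow> 'a::zero) \<Rightarrow> 'a^'n^'n" where
  "diag_mat d = (\<chi> i j. if i = j then d i else 0)"

definition incidence :: "('e \<Rightarrow> 'v) \<Rightarrow> ('e \<Rightarrow> 'v) \<Rightarrow> real^'e^'v" where
  "incidence head tail = (\<chi> v e. if v = head e then 1 else if v = tail e then -1 else 0)"

definition laplacian :: "('e::finite \<Rightarrow> 'v::finite) \<Rightarrow> ('e \<Rightarrow> 'v) \<Rightarrow> ('e \<Rightarrow> real) \<Rightarrow> real^'v^'v" where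
  "laplacian head tail w = incidence head tail ** diag_mat w ** transpose (incidence head tail)"

definition degree_mat :: "('e::finite \<Rightarrow> 'v::finite) \<Rightarrow> ('e \<Rightarrow> 'v) \<Rightarrow> ('e \<Rightarrow> real) \<Rightarrow> real^'v^'v" where
  "degree_mat head tail w = diag_mat (\<lambda>i. laplacian head tail w $ i $ i)"

definition adjacency_mat :: "('e::finite \<Rightarrow> 'v::finite) \<Rightarrow> ('e \<Rightarrow> 'v) \<Rightarrow> ('e \<Rightarrow> real) \<Rightarrow> real^'v^'v" where
  "adjacency_mat head tail w = degree_mat head tail w - laplacian head tail w"

definition centering :: "real^'n::finite^'n" where
  "centering = mat 1 - (\<chi> i j. 1 / real CARD('n))"

datatype agent_structure = Dynamics_noise | Sensor_noise | Receiver_noise | Emitter_noise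
datatype link_structure = Communication_noise | Measurement_noise

definition agent_B :: "agent_structure \<Rightarrow> ('e::finite \<Rightarrow> 'v::finite) \<Rightarrow> ('e \<Rightarrow> 'v) \<Rightarrow> ('e \<Rightarrow> real) \<Rightarrow> real^'v^'v" where
  "agent_B s head tail w = (case s of
      Dynamics_noise \<Rightarrow> mat 1
    | Sensor_noise \<Rightarrow> laplacian head tail w
    | Receiver_noise \<Rightarrow> degree_mat head tail w
    | Emitter_noise \<Rightarrow> adjacency_mat head tail w)"

definition link_B :: "link_structure \<Rightarrow> ('e::finite \<Rightarrow> 'v::finite) \<Rightarrow> ('e \<Rightarrow> 'v) \<Rightarrow> ('e \<Rightarrow> real) \<Rightarrow> real^'e^'v" where
  "link_B s head tail w = (case s of
      Communication_noise \<Rightarrow> incidence head tail ** diag_mat w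
    | Measurement_noise \<Rightarrow> - incidence head tail)"

definition cmat :: "real^'m^'n \<Rightarrow> complex^'m^'n" where
  "cmat A = (\<chi> i j. complex_of_real (A $ i $ j))"

definition conj_transpose :: "complex^'m^'n \<Rightarrow> complex^'n^'m" where
  "conj_transpose A = (\<chi> i j. cnj (A $ j $ i))"

definition transfer :: "real \<Rightarrow> real^'n::finite^'n \<Rightarrow> real^'k::finite^'n \<Rightarrow> ('k \<Rightarrow> real) \<Rightarrow> complex \<Rightarrow> complex^'k^'n" where
  "transfer tau L B sigma2 s =
     cmat centering ** matrix_inv (mat s + (\<chi> i j. exp (- (complex_of_real tau) * s) * (cmat L $ i $ j)))
       ** cmat B ** cmat (diag_mat (\<lambda>k. sqrt (sigma2 k)))"

definition rho_ss :: "real \<Rightarrow> real^'n::finite^'n \<Rightarrow> real^'k::finite^'n \<Rightarrow> ('k \<Rightarrow> real) \<Rightarrow> real" where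
  "rho_ss tau L B sigma2 = (1 / (2 * pi)) *
     (LINT \<omega>|lborel. Re (trace (conj_transpose (transfer tau L B sigma2 (\<i> * complex_of_real \<omega>))
                                 ** transfer tau L B sigma2 (\<i> * complex_of_real \<omega>))))"

definition centrality :: "real \<Rightarrow> real^'n::finite^'n \<Rightarrow> real^'k::finite^'n \<Rightarrow> ('k \<Rightarrow> real) \<Rightarrow> 'k \<Rightarrow> real" where
  "centrality tau L B sigma2 k = deriv (\<lambda>t. rho_ss tau L B (sigma2(k := t))) (sigma2 k)"

definition eta :: "real \<Rightarrow> agent_structure \<Rightarrow> ('e::finite \<Rightarrow> 'v::finite) \<Rightarrow> ('e \<Rightarrow> 'v) \<Rightarrow> ('e \<Rightarrow> real) \<Rightarrow> ('v \<Rightarrow> real) \<Rightarrow> 'v \<Rightarrow> real" where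
  "eta tau s head tail w sigma2 i = centrality tau (laplacian head tail w) (agent_B s head tail w) sigma2 i"

definition nu :: "real \<Rightarrow> link_structure \<Rightarrow> ('e::finite \<Rightarrow> 'v::finite) \<Rightarrow> ('e \<Rightarrow> 'v) \<Rightarrow> ('e \<Rightarrow> real) \<Rightarrow> ('e \<Rightarrow> real) \<Rightarrow> 'e \<Rightarrow> real" where
  "nu tau s head tail w sigma2 e = centrality tau (laplacian head tail w) (link_B s head tail w) sigma2 e"

end

theory Submission imports Defs begin

definition Amat :: "real^'n::finite^'n \<Rightarrow> real \<Rightarrow> complex^'n^'n" where
  "Amat L \<omega> = mat (\<i> * complex_of_real \<omega>) + cmat L"

lemma Amat_ker:
  fixes L :: "real^'n::finite^'n"
  assumes sym: "transpose L = L" and w: "\<omega> \<noteq> 0" and Ax: "Amat L \<omega> *v x = 0"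
  shows "x = 0"
proof -
  have eq: "\<And>i. \<i> * complex_of_real \<omega> * x$i + (\<Sum>j\<in>UNIV. complex_of_real (L$i$j) * x$j) = 0"
  proof -
    fix i
    have "(Amat L \<omega> *v x)$i = 0" using Ax by simp
    thus "\<i> * complex_of_real \<omega> * x$i + (\<Sum>j\<in>UNIV. complex_of_real (L$i$j) * x$j) = 0"
      by (simp add: Amat_def matrix_vector_mult_def cmat_def mat_def sum.distrib distrib_right
            if_distrib[where f="\<lambda>z. z * _"] cong: if_cong)
  qed
  define S where "S = (\<Sum>i\<in>UNIV. cnj (x$i) * (\<Sum>j\<in>UNIV. complex_of_real (L$i$j) * x$j))"
  have Lsym: "\<And>i j. L$i$j = L$j$i" using sym by (metis transpose_def vec_lambda_beta)
  have "cnj S = (\<Sum>i\<in>UNIV. x$i * (\<Sum>j\<in>UNIV. complex_of_real (L$i$j) * cnj (x$j)))"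
    by (simp add: S_def)
  also have "\<dots> = (\<Sum>i\<in>UNIV. \<Sum>j\<in>UNIV. complex_of_real (L$i$j) * x$i * cnj (x$j))"
    by (simp add: sum_distrib_left mult_ac)
  also have "\<dots> = (\<Sum>j\<in>UNIV. \<Sum>i\<in>UNIV. complex_of_real (L$i$j) * x$i * cnj (x$j))"
    by (rule sum.swap)
  also have "\<dots> = S"
    by (simp add: S_def sum_distrib_left mult_ac Lsym)
  finally have "cnj S = S" .
  hence ImS: "Im S = 0" by (metis cnj.sel(2) complex_cnj_cancel_iff neg_equal_zero)
  have "0 = (\<Sum>i\<in>UNIV. cnj (x$i) * (\<i> * complex_of_real \<omega> * x$i + (\<Sum>j\<in>UNIV. complex_of_real (L$i$j) * x$j)))"
    using eq by simp
  also have "\<dots> = \<i> * complex_of_real \<omega> * (\<Sum>i\<in>UNIV. cnj (x$i) * x$i) + S"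
    by (simp add: S_def distrib_left sum.distrib sum_distrib_left mult_ac)
  also have "(\<Sum>i\<in>UNIV. cnj (x$i) * x$i) = complex_of_real (\<Sum>i\<in>UNIV. (cmod (x$i))^2)"
    unfolding of_real_sum by (rule sum.cong[OF refl]) (simp only: complex_norm_square mult.commute)
  finally have "0 = Im (\<i> * complex_of_real \<omega> * complex_of_real (\<Sum>i\<in>UNIV. (cmod (x$i))^2) + S)"
    by simp
  hence "\<omega> * (\<Sum>i\<in>UNIV. (cmod (x$i))^2) = 0" using ImS by simp
  hence "(\<Sum>i\<in>UNIV. (cmod (x$i))^2) = 0" using w by simp
  hence "\<forall>i. (cmod (x$i))^2 = 0" by (simp add: sum_nonneg_eq_0_iff)
  thus "x = 0" by (simp add: vec_eq_iff)
qed

lemma Amat_invertible: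
  fixes L :: "real^'n::finite^'n"
  assumes sym: "transpose L = L" and w: "\<omega> \<noteq> 0"
  shows "invertible (Amat L \<omega>)"
  using Amat_ker[OF sym w] matrix_left_invertible_ker invertible_left_inverse by blast


lemma matrix_inv_props:
  fixes A :: "'a::semiring_1^'n^'m"
  assumes "invertible A"
  shows "A ** matrix_inv A = mat 1" "matrix_inv A ** A = mat 1"
proof -
  have "\<exists>A'. A ** A' = mat 1 \<and> A' ** A = mat 1" using assms unfolding invertible_def by blast
  hence "A ** matrix_inv A = mat 1 \<and> matrix_inv A ** A = mat 1"
    unfolding matrix_inv_def by (rule someI_ex)
  thus "A ** matrix_inv A = mat 1" "matrix_inv A ** A = mat 1" by auto
qed

lemma matrix_inv_unique:
  fixes A :: "'a::comm_ring_1^'n^'n"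
  assumes "A ** B = mat 1" "B ** A = mat 1"
  shows "matrix_inv A = B"
proof -
  have inv: "invertible A" using assms unfolding invertible_def by blast
  have "matrix_inv A = matrix_inv A ** (A ** B)" using assms by simp
  also have "\<dots> = (matrix_inv A ** A) ** B" by (simp add: matrix_mul_assoc)
  also have "\<dots> = B" using matrix_inv_props(2)[OF inv] by simp
  finally show ?thesis .
qed

lemma matrix_inv_scaleR:
  fixes A :: "complex^'n^'n"
  assumes "invertible A" "c \<noteq> 0"
  shows "matrix_inv (c *\<^sub>R A) = (1/c) *\<^sub>R matrix_inv A"
  apply (rule matrix_inv_unique)
  using matrix_inv_props[OF assms(1)] assms(2)
  by (simp_all add: matrix_scalar_ac flip: scalar_matrix_assoc)

lemma matrix_inv_cramer:
  fixes A :: "'a::field^'n^'n"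
  assumes "invertible A"
  shows "matrix_inv A $ k $ j = det (\<chi> i l. if l = k then (if i = j then 1 else 0) else A$i$l) / det A"
proof -
  define v where "v = (\<chi> k. matrix_inv A $ k $ j)"
  have "A *v v = (\<chi> i. (A ** matrix_inv A) $ i $ j)"
    by (simp add: v_def matrix_vector_mult_def matrix_matrix_mult_def)
  also have "\<dots> = (\<chi> i. if i = j then 1 else 0)"
    using matrix_inv_props(1)[OF assms] by (simp add: mat_def)
  finally have "A *v v = (\<chi> i. if i = j then 1 else 0)" .
  moreover have "det A \<noteq> 0" using assms invertible_det_nz by blast
  ultimately have "v = (\<chi> k. det(\<chi> i l. if l=k then (\<chi> i. if i = j then 1 else 0)$i else A$i$l) / det A)"
    using cramer by blast
  hence "v $ k = det(\<chi> i l. if l=k then (\<chi> i. if i = j then (1::'a) else 0)$i else A$i$l) / det A"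
    by simp
  moreover have "(\<chi> i l. if l=k then (\<chi> i. if i = j then (1::'a) else 0)$i else A$i$l)
     = (\<chi> i l. if l = k then (if i = j then 1 else 0) else A$i$l)"
    by (simp add: vec_eq_iff)
  ultimately show ?thesis by (simp add: v_def)
qed

lemma continuous_on_det:
  fixes f :: "real \<Rightarrow> 'n::finite \<Rightarrow> 'n \<Rightarrow> complex"
  assumes "\<And>i j. continuous_on S (\<lambda>x. f x i j)"
  shows "continuous_on S (\<lambda>x. det (\<chi> i j. f x i j))"
  unfolding det_def by (simp add: assms continuous_intros)


lemma cont_if_const: "continuous_on S f \<Longrightarrow> continuous_on S (\<lambda>x. if P then c else f x)"
  by (cases P) auto

lemma Amat_entry_cont: "continuous_on S (\<lambda>\<omega>. Amat L \<omega> $ i $ l)"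
  by (cases "i = l") (simp_all add: Amat_def mat_def cmat_def continuous_intros)

lemma inv_cont:
  fixes L :: "real^'n::finite^'n"
  assumes sym: "transpose L = L"
  shows "continuous_on (-{0}) (\<lambda>\<omega>. matrix_inv (Amat L \<omega>) $ a $ b)"
proof -
  have e: "\<And>i l. continuous_on (-{0}) (\<lambda>\<omega>. if l = a then (if i = b then 1 else 0) else Amat L \<omega> $ i $ l)"
    by (rule cont_if_const, rule Amat_entry_cont)
  have e2: "\<And>i l. continuous_on (-{0}) (\<lambda>\<omega>. Amat L \<omega> $ i $ l)"
    by (rule Amat_entry_cont)
  have d1: "continuous_on (-{0}) (\<lambda>\<omega>. det (\<chi> i l. if l = a then (if i = b then 1 else 0) else Amat L \<omega> $ i $ l))"
    by (rule continuous_on_det[OF e])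
  have d2: "continuous_on (-{0}) (\<lambda>\<omega>. det (\<chi> i l. Amat L \<omega> $ i $ l))"
    by (rule continuous_on_det[OF e2])
  have d2': "continuous_on (-{0}) (\<lambda>\<omega>. det (Amat L \<omega>))"
    using d2 by (simp only: vec_lambda_eta)
  have nz: "\<forall>x\<in>-{0}. det (Amat L x) \<noteq> 0"
    using Amat_invertible[OF sym] invertible_det_nz by auto
  have q: "continuous_on (-{0}) (\<lambda>\<omega>. det (\<chi> i l. if l = a then (if i = b then 1 else 0) else Amat L \<omega> $ i $ l) / det (Amat L \<omega>))"
    by (rule continuous_on_divide[OF d1 d2' nz])
  show ?thesis
  proof (rule continuous_on_eq[OF q])
    fix x :: real assume "x \<in> -{0}"
    hence "invertible (Amat L x)" using Amat_invertible[OF sym] by auto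
    thus "det (\<chi> i l. if l = a then (if i = b then 1 else 0) else Amat L x $ i $ l) / det (Amat L x) = matrix_inv (Amat L x) $ a $ b"
      by (rule matrix_inv_cramer[symmetric])
  qed
qed

definition Ymat :: "real^'n::finite^'n \<Rightarrow> real^'k::finite^'n \<Rightarrow> real \<Rightarrow> complex^'k^'n" where
  "Ymat L B \<omega> = cmat centering ** matrix_inv (Amat L \<omega>) ** cmat B"

definition hfun :: "real^'n::finite^'n \<Rightarrow> real^'k::finite^'n \<Rightarrow> 'k \<Rightarrow> real \<Rightarrow> real" where
  "hfun L B k \<omega> = (\<Sum>j\<in>UNIV. (cmod (Ymat L B \<omega> $ j $ k))^2)"

lemma hfun_meas:
  fixes L :: "real^'n::finite^'n"
  assumes sym: "transpose L = L"
  shows "hfun L B k \<in> borel_measurable borel"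
proof (rule borel_measurable_continuous_countable_exceptions[where X="{0}"])
  have c: "\<And>a b. continuous_on (-{0}) (\<lambda>\<omega>. matrix_inv (Amat L \<omega>) $ a $ b)"
    using inv_cont[OF sym] .
  have Y: "\<And>j. continuous_on (-{0}) (\<lambda>\<omega>. Ymat L B \<omega> $ j $ k)"
  proof -
    fix j
    have eq: "(\<lambda>\<omega>. Ymat L B \<omega> $ j $ k) = (\<lambda>\<omega>. \<Sum>l\<in>UNIV. (\<Sum>m\<in>UNIV. cmat centering $ j $ m * matrix_inv (Amat L \<omega>) $ m $ l) * cmat B $ l $ k)"
      unfolding Ymat_def matrix_matrix_mult_def by simp
    show "continuous_on (-{0}) (\<lambda>\<omega>. Ymat L B \<omega> $ j $ k)"
      unfolding eq by (intro continuous_on_sum continuous_on_mult continuous_on_const c)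
  qed
  show "continuous_on (-{0}) (hfun L B k)"
    unfolding hfun_def by (intro continuous_on_sum continuous_on_power continuous_on_norm Y)
qed auto


lemma transfer0:
  "transfer 0 L B \<sigma> (\<i> * complex_of_real \<omega>) = Ymat L B \<omega> ** cmat (diag_mat (\<lambda>k. sqrt (\<sigma> k)))"
  unfolding transfer_def Ymat_def Amat_def by simp

lemma mult_diag_entry:
  fixes Y :: "complex^'k::finite^'n::finite"
  shows "(Y ** cmat (diag_mat d)) $ j $ k = Y $ j $ k * complex_of_real (d k)"
  unfolding matrix_matrix_mult_def cmat_def diag_mat_def
  by (simp add: if_distrib[where f=complex_of_real] if_distrib[where f="\<lambda>z. _ * z"] cong: if_cong)

lemma trace_ct:
  fixes X :: "complex^'k::finite^'n::finite"
  shows "Re (trace (conj_transpose X ** X)) = (\<Sum>k\<in>UNIV. \<Sum>j\<in>UNIV. (cmod (X $ j $ k))^2)"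
  unfolding trace_def conj_transpose_def matrix_matrix_mult_def
  by (simp add: Re_sum complex_mult_cnj power2_eq_square cmod_def)

lemma sqrt_sq_abs: "(sqrt x)^2 = \<bar>x\<bar>"
  by (metis real_sqrt_abs real_sqrt_pow2 abs_ge_zero real_sqrt_power)

lemma rho_eq:
  "rho_ss 0 L B \<sigma> = (1/(2*pi)) * (LINT \<omega>|lborel. (\<Sum>k\<in>UNIV. \<bar>\<sigma> k\<bar> * hfun L B k \<omega>))"
proof -
  have "\<And>\<omega>. Re (trace (conj_transpose (transfer 0 L B \<sigma> (\<i> * complex_of_real \<omega>)) ** transfer 0 L B \<sigma> (\<i> * complex_of_real \<omega>)))
     = (\<Sum>k\<in>UNIV. \<bar>\<sigma> k\<bar> * hfun L B k \<omega>)"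
    unfolding transfer0 trace_ct mult_diag_entry hfun_def
    by (simp add: norm_mult power_mult_distrib sqrt_sq_abs sum_distrib_left mult_ac)
  thus ?thesis unfolding rho_ss_def by simp
qed


lemma cmat_scaleR: "cmat (c *\<^sub>R A) = c *\<^sub>R cmat A"
  by (simp add: cmat_def vec_eq_iff) (simp add: scaleR_conv_of_real)

lemma Amat_scale:
  assumes "\<alpha> \<noteq> 0"
  shows "Amat (\<alpha> *\<^sub>R L) \<omega> = \<alpha> *\<^sub>R Amat L (\<omega> / \<alpha>)"
  using assms by (simp add: Amat_def cmat_def mat_def vec_eq_iff) (simp add: scaleR_conv_of_real field_simps)

lemma transpose_scaleR: "transpose (c *\<^sub>R (L::real^'n^'n)) = c *\<^sub>R transpose L"
  by (simp add: transpose_def vec_eq_iff)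

lemma Ymat_scale:
  fixes L :: "real^'n::finite^'n"
  assumes sym: "transpose L = L" and a: "\<alpha> > 0" and w: "\<omega> \<noteq> 0"
  shows "Ymat (\<alpha> *\<^sub>R L) (\<beta> *\<^sub>R B) \<omega> = (\<beta> / \<alpha>) *\<^sub>R Ymat L B (\<omega> / \<alpha>)"
proof -
  have inv: "invertible (Amat L (\<omega> / \<alpha>))" using Amat_invertible[OF sym] a w by simp
  have "matrix_inv (Amat (\<alpha> *\<^sub>R L) \<omega>) = (1/\<alpha>) *\<^sub>R matrix_inv (Amat L (\<omega> / \<alpha>))"
    using a by (simp add: Amat_scale matrix_inv_scaleR[OF inv])
  thus ?thesis
    unfolding Ymat_def cmat_scaleR
    by (simp add: matrix_scalar_ac flip: scalar_matrix_assoc)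
qed

lemma hfun_scale:
  fixes L :: "real^'n::finite^'n"
  assumes sym: "transpose L = L" and a: "\<alpha> > 0" and w: "\<omega> \<noteq> 0"
  shows "hfun (\<alpha> *\<^sub>R L) (\<beta> *\<^sub>R B) k \<omega> = (\<beta> / \<alpha>)^2 * hfun L B k (\<omega> / \<alpha>)"
  unfolding hfun_def Ymat_scale[OF assms]
  by (simp add: sum_distrib_left power_mult_distrib power_divide)

lemma rho_scale:
  fixes L :: "real^'n::finite^'n" and B :: "real^'k::finite^'n"
  assumes sym: "transpose L = L" and a: "\<alpha> > 0"
  shows "rho_ss 0 (\<alpha> *\<^sub>R L) (\<beta> *\<^sub>R B) \<sigma> = (\<beta>^2 / \<alpha>) * rho_ss 0 L B \<sigma>"
proof -
  define F where "F = (\<lambda>\<omega>. \<Sum>k\<in>UNIV. \<bar>\<sigma> k\<bar> * hfun L B k \<omega>)"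
  define F' where "F' = (\<lambda>\<omega>. \<Sum>k\<in>UNIV. \<bar>\<sigma> k\<bar> * hfun (\<alpha> *\<^sub>R L) (\<beta> *\<^sub>R B) k \<omega>)"
  have sym': "transpose (\<alpha> *\<^sub>R L) = \<alpha> *\<^sub>R L" by (simp add: transpose_scaleR sym)
  have mF [measurable]: "F \<in> borel_measurable borel"
    unfolding F_def using hfun_meas[OF sym] by measurable
  have mF' [measurable]: "F' \<in> borel_measurable borel"
    unfolding F'_def using hfun_meas[OF sym'] by measurable
  have ae: "AE \<omega> in lborel. F' \<omega> = (\<beta> / \<alpha>)^2 * F (\<omega> / \<alpha>)"
    using AE_lborel_singleton[of 0]
    by eventually_elim (simp add: F_def F'_def hfun_scale[OF sym a] sum_distrib_left mult_ac)
  have "(LINT \<omega>|lborel. F' \<omega>) = (LINT \<omega>|lborel. (\<beta> / \<alpha>)^2 * F (\<omega> / \<alpha>))"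
    by (rule integral_cong_AE) (use ae in auto)
  also have "\<dots> = (\<beta> / \<alpha>)^2 * (LINT \<omega>|lborel. F (\<omega> / \<alpha>))" by simp
  also have "(LINT \<omega>|lborel. F (\<omega> / \<alpha>)) = \<alpha> * (LINT \<omega>|lborel. F \<omega>)"
    using lborel_integral_real_affine[of \<alpha> "\<lambda>\<omega>. F (\<omega> / \<alpha>)" 0] a by simp
  finally have "(LINT \<omega>|lborel. F' \<omega>) = (\<beta>^2 / \<alpha>) * (LINT \<omega>|lborel. F \<omega>)"
    using a by (simp add: power_divide field_simps power2_eq_square)
  thus ?thesis unfolding rho_eq F_def[symmetric] F'_def[symmetric] by simp
qed


lemma hfun_nonneg: "hfun L B k \<omega> \<ge> 0"
  unfolding hfun_def by (simp add: sum_nonneg)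

lemma rho_differentiable:
  fixes L :: "real^'n::finite^'n" and B :: "real^'k::finite^'n"
  assumes sym: "transpose L = L" and pos: "\<forall>j. \<sigma> j > 0"
  shows "\<exists>D. ((\<lambda>t. rho_ss 0 L B (\<sigma>(k:=t))) has_real_derivative D) (at (\<sigma> k))"
proof -
  define h where "h = (\<lambda>j \<omega>. hfun L B j \<omega>)"
  define F where "F = (\<lambda>\<omega>. \<Sum>j\<in>UNIV. \<sigma> j * h j \<omega>)"
  have mh [measurable]: "\<And>j. h j \<in> borel_measurable borel" unfolding h_def by (rule hfun_meas[OF sym])
  have mF [measurable]: "F \<in> borel_measurable borel" unfolding F_def by measurable
  have hnn: "\<And>j \<omega>. h j \<omega> \<ge> 0" unfolding h_def by (rule hfun_nonneg)
  have sk: "\<sigma> k > 0" using pos by simp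
  have nn: "\<And>j \<omega>. 0 \<le> \<sigma> j * h j \<omega>" using pos hnn by (simp add: less_imp_le)
  have Fge: "\<And>\<omega>. \<sigma> k * h k \<omega> \<le> F \<omega>"
  proof -
    fix \<omega>
    have "\<sigma> k * h k \<omega> = (\<Sum>j\<in>{k}. \<sigma> j * h j \<omega>)" by simp
    also have "\<dots> \<le> F \<omega>" unfolding F_def
      by (rule sum_mono2) (auto simp: nn)
    finally show "\<sigma> k * h k \<omega> \<le> F \<omega>" .
  qed
  have Ft: "\<And>t \<omega>. t > 0 \<Longrightarrow> (\<Sum>j\<in>UNIV. \<bar>(\<sigma>(k:=t)) j\<bar> * hfun L B j \<omega>) = F \<omega> + (t - \<sigma> k) * h k \<omega>"
  proof -
    fix t :: real and \<omega> assume t: "t > 0"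
    have "(\<Sum>j\<in>UNIV. \<bar>(\<sigma>(k:=t)) j\<bar> * hfun L B j \<omega>) = (\<Sum>j\<in>UNIV. \<sigma> j * h j \<omega> + (if j = k then (t - \<sigma> k) * h k \<omega> else 0))"
      using t pos by (intro sum.cong refl) (auto simp: h_def algebra_simps abs_of_pos)
    also have "\<dots> = F \<omega> + (t - \<sigma> k) * h k \<omega>"
      unfolding F_def by (simp add: sum.distrib)
    finally show "?thesis t \<omega>" .
  qed
  have g: "\<And>t. t > 0 \<Longrightarrow> rho_ss 0 L B (\<sigma>(k:=t)) = (1/(2*pi)) * (LINT \<omega>|lborel. F \<omega> + (t - \<sigma> k) * h k \<omega>)"
    unfolding rho_eq using Ft by simp
  show ?thesis
  proof (cases "integrable lborel F")
    case True
    have ih: "integrable lborel (h k)"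
    proof (rule Bochner_Integration.integrable_bound[where f="\<lambda>\<omega>. F \<omega> / \<sigma> k"])
      show "integrable lborel (\<lambda>\<omega>. F \<omega> / \<sigma> k)" using True by simp
      show "h k \<in> borel_measurable lborel" by simp
      show "AE \<omega> in lborel. norm (h k \<omega>) \<le> norm (F \<omega> / \<sigma> k)"
      proof (rule AE_I2)
        fix \<omega>
        have "h k \<omega> \<le> F \<omega> / \<sigma> k" using Fge[of \<omega>] sk by (simp add: field_simps)
        moreover have "0 \<le> h k \<omega>" by (rule hnn)
        moreover have "0 \<le> F \<omega>" using Fge[of \<omega>] nn[of k \<omega>] by linarith
        ultimately show "norm (h k \<omega>) \<le> norm (F \<omega> / \<sigma> k)" using sk by simp
      qed
    qed
    define a where "a = (LINT \<omega>|lborel. F \<omega>)"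
    define b where "b = (LINT \<omega>|lborel. h k \<omega>)"
    have eq: "\<And>t. t \<in> {0<..} \<Longrightarrow> (1/(2*pi)) * (a + (t - \<sigma> k) * b) = rho_ss 0 L B (\<sigma>(k:=t))"
      using g True ih by (simp add: a_def b_def)
    have d: "((\<lambda>t. (1/(2*pi)) * (a + (t - \<sigma> k) * b)) has_real_derivative (1/(2*pi)) * b) (at (\<sigma> k))"
      by (auto intro!: derivative_eq_intros)
    have "((\<lambda>t. rho_ss 0 L B (\<sigma>(k:=t))) has_real_derivative (1/(2*pi)) * b) (at (\<sigma> k))"
      by (rule has_field_derivative_transform_within_open[OF d, of "{0<..}"]) (use sk eq in auto)
    then show ?thesis by blast
  next
    case False
    have eq: "\<And>t. t \<in> {0<..} \<Longrightarrow> (\<lambda>t. 0) t = rho_ss 0 L B (\<sigma>(k:=t))"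
    proof -
      fix t :: real assume "t \<in> {0<..}"
      hence t: "t > 0" by simp
      have "\<not> integrable lborel (\<lambda>\<omega>. F \<omega> + (t - \<sigma> k) * h k \<omega>)"
      proof
        assume I: "integrable lborel (\<lambda>\<omega>. F \<omega> + (t - \<sigma> k) * h k \<omega>)"
        have "integrable lborel F"
        proof (rule Bochner_Integration.integrable_bound[where f="\<lambda>\<omega>. (1 + \<sigma> k / t) * (F \<omega> + (t - \<sigma> k) * h k \<omega>)"])
          show "integrable lborel (\<lambda>\<omega>. (1 + \<sigma> k / t) * (F \<omega> + (t - \<sigma> k) * h k \<omega>))"
            using I by simp
          show "F \<in> borel_measurable lborel" by simp
          show "AE \<omega> in lborel. norm (F \<omega>) \<le> norm ((1 + \<sigma> k / t) * (F \<omega> + (t - \<sigma> k) * h k \<omega>))"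
          proof (rule AE_I2)
            fix \<omega>
            have h0: "0 \<le> h k \<omega>" by (rule hnn)
            have F0: "0 \<le> F \<omega>" using Fge[of \<omega>] sk h0 by (smt (verit) mult_nonneg_nonneg)
            have Ft0: "t * h k \<omega> \<le> F \<omega> + (t - \<sigma> k) * h k \<omega>" using Fge[of \<omega>] by (simp add: algebra_simps)
            have th: "\<sigma> k * h k \<omega> \<le> (\<sigma> k / t) * (F \<omega> + (t - \<sigma> k) * h k \<omega>)"
            proof -
              have "\<sigma> k * h k \<omega> = (\<sigma> k / t) * (t * h k \<omega>)" using t by simp
              also have "\<dots> \<le> (\<sigma> k / t) * (F \<omega> + (t - \<sigma> k) * h k \<omega>)"
                using Ft0 sk t by (intro mult_left_mono) auto
              finally show ?thesis .
            qed
            have dd: "(1 + \<sigma> k / t) * (F \<omega> + (t - \<sigma> k) * h k \<omega>) = (F \<omega> + (t - \<sigma> k) * h k \<omega>) + (\<sigma> k / t) * (F \<omega> + (t - \<sigma> k) * h k \<omega>)"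
              by (simp add: algebra_simps)
            have th0: "0 \<le> t * h k \<omega>" using t h0 by simp
            have "F \<omega> \<le> (1 + \<sigma> k / t) * (F \<omega> + (t - \<sigma> k) * h k \<omega>)"
              unfolding dd using th th0 by (simp add: algebra_simps)
            moreover have "0 \<le> F \<omega> + (t - \<sigma> k) * h k \<omega>" using Ft0 t h0 by (smt (verit) mult_nonneg_nonneg)
            ultimately show "norm (F \<omega>) \<le> norm ((1 + \<sigma> k / t) * (F \<omega> + (t - \<sigma> k) * h k \<omega>))"
              using F0 sk t by simp
          qed
        qed
        thus False using False by simp
      qed
      thus "(\<lambda>t. 0) t = rho_ss 0 L B (\<sigma>(k:=t))" using g[OF t] not_integrable_integral_eq by simp
    qed
    have d: "((\<lambda>t. 0) has_real_derivative 0) (at (\<sigma> k))" by simp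
    have "((\<lambda>t. rho_ss 0 L B (\<sigma>(k:=t))) has_real_derivative 0) (at (\<sigma> k))"
      by (rule has_field_derivative_transform_within_open[OF d, of "{0<..}"]) (use sk eq in auto)
    then show ?thesis by blast
  qed
qed


lemma centrality_scale:
  fixes L :: "real^'n::finite^'n" and B :: "real^'k::finite^'n"
  assumes sym: "transpose L = L" and a: "\<alpha> > 0" and pos: "\<forall>j. \<sigma> j > 0"
  shows "centrality 0 (\<alpha> *\<^sub>R L) (\<beta> *\<^sub>R B) \<sigma> k = (\<beta>^2 / \<alpha>) * centrality 0 L B \<sigma> k"
proof -
  obtain D where D: "((\<lambda>t. rho_ss 0 L B (\<sigma>(k:=t))) has_real_derivative D) (at (\<sigma> k))"
    using rho_differentiable[OF sym pos] by blast
  have feq: "(\<lambda>t. rho_ss 0 (\<alpha> *\<^sub>R L) (\<beta> *\<^sub>R B) (\<sigma>(k:=t))) = (\<lambda>t. (\<beta>^2 / \<alpha>) * rho_ss 0 L B (\<sigma>(k:=t)))"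
    by (intro ext) (rule rho_scale[OF sym a])
  have D2: "((\<lambda>t. (\<beta>^2 / \<alpha>) * rho_ss 0 L B (\<sigma>(k:=t))) has_real_derivative (\<beta>^2 / \<alpha>) * D) (at (\<sigma> k))"
    by (rule DERIV_cmult[OF D])
  show ?thesis
    unfolding centrality_def feq using DERIV_imp_deriv[OF D2] DERIV_imp_deriv[OF D] by simp
qed

lemma diag_scale: "diag_mat (\<lambda>e. \<alpha> * w e) = \<alpha> *\<^sub>R (diag_mat w :: real^'n^'n)"
  by (simp add: diag_mat_def vec_eq_iff)

lemma lap_scale: "laplacian head tail (\<lambda>e. \<alpha> * w e) = \<alpha> *\<^sub>R laplacian head tail w"
  unfolding laplacian_def diag_scale by (simp add: matrix_scalar_ac flip: scalar_matrix_assoc)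

lemma lap_sym:
  fixes head tail :: "'e::finite \<Rightarrow> 'v::finite" and w :: "'e \<Rightarrow> real"
  shows "transpose (laplacian head tail w) = laplacian head tail w"
proof -
  have "transpose (diag_mat w :: real^'e^'e) = diag_mat w"
    by (simp add: diag_mat_def transpose_def vec_eq_iff)
  thus ?thesis unfolding laplacian_def by (simp add: matrix_transpose_mul matrix_mul_assoc)
qed

lemma deg_scale: "degree_mat head tail (\<lambda>e. \<alpha> * w e) = \<alpha> *\<^sub>R degree_mat head tail w"
  unfolding degree_mat_def lap_scale by (simp add: diag_mat_def vec_eq_iff)

lemma adj_scale: "adjacency_mat head tail (\<lambda>e. \<alpha> * w e) = \<alpha> *\<^sub>R adjacency_mat head tail w"
  unfolding adjacency_mat_def deg_scale lap_scale by (simp add: scaleR_diff_right)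

lemma agentB_scale:
  assumes "\<alpha> > 0"
  shows "\<exists>\<beta>. \<beta> \<noteq> 0 \<and> agent_B s head tail (\<lambda>e. \<alpha> * w e) = \<beta> *\<^sub>R agent_B s head tail w"
  using assms by (cases s) (auto simp: agent_B_def lap_scale deg_scale adj_scale intro: exI[of _ 1] exI[of _ \<alpha>])

lemma linkB_scale:
  assumes "\<alpha> > 0"
  shows "\<exists>\<beta>. \<beta> \<noteq> 0 \<and> link_B s head tail (\<lambda>e. \<alpha> * w e) = \<beta> *\<^sub>R link_B s head tail w"
proof (cases s)
  case Communication_noise
  thus ?thesis using assms
    by (intro exI[of _ \<alpha>]) (simp add: link_B_def diag_scale matrix_scalar_ac flip: scalar_matrix_assoc)
next
  case Measurement_noise
  thus ?thesis by (intro exI[of _ 1]) (simp add: link_B_def)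
qed

theorem theorem11:
  fixes head tail :: "'e::finite \<Rightarrow> 'v::finite" and w :: "'e \<Rightarrow> real"
  assumes "simple_undirected_graph head tail"
    and "connected_graph head tail"
    and "\<forall>e. w e > 0"
  shows "(\<forall>(s::agent_structure) (sigma2::'v \<Rightarrow> real) (\<alpha>::real) i j.
            (\<forall>k. sigma2 k > 0) \<longrightarrow> \<alpha> > 0 \<longrightarrow>
            (eta 0 s head tail (\<lambda>e. \<alpha> * w e) sigma2 i > eta 0 s head tail (\<lambda>e. \<alpha> * w e) sigma2 j
              \<longleftrightarrow> eta 0 s head tail w sigma2 i > eta 0 s head tail w sigma2 j))
       \<and> (\<forall>(s::link_structure) (sigma2::'e \<Rightarrow> real) (\<alpha>::real) e f.
            (\<forall>k. sigma2 k > 0) \<longrightarrow> \<alpha> > 0 \<longrightarrow>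
            (nu 0 s head tail (\<lambda>e. \<alpha> * w e) sigma2 e > nu 0 s head tail (\<lambda>e. \<alpha> * w e) sigma2 f
              \<longleftrightarrow> nu 0 s head tail w sigma2 e > nu 0 s head tail w sigma2 f))"
proof (intro conjI allI impI)
  fix s :: agent_structure and sigma2 :: "'v \<Rightarrow> real" and \<alpha> :: real and i j
  assume pos: "\<forall>k. sigma2 k > 0" and a: "\<alpha> > 0"
  obtain \<beta> where b: "\<beta> \<noteq> 0" and B: "agent_B s head tail (\<lambda>e. \<alpha> * w e) = \<beta> *\<^sub>R agent_B s head tail w"
    using agentB_scale[OF a] by blast
  have c: "\<beta>^2 / \<alpha> > 0" using a b by simp
  have eq: "\<And>k. eta 0 s head tail (\<lambda>e. \<alpha> * w e) sigma2 k = (\<beta>^2 / \<alpha>) * eta 0 s head tail w sigma2 k"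
    unfolding eta_def B lap_scale by (rule centrality_scale[OF lap_sym a pos])
  thus "(eta 0 s head tail (\<lambda>e. \<alpha> * w e) sigma2 i > eta 0 s head tail (\<lambda>e. \<alpha> * w e) sigma2 j
              \<longleftrightarrow> eta 0 s head tail w sigma2 i > eta 0 s head tail w sigma2 j)"
    by (simp only: eq mult_less_cancel_left_pos[OF c])
next
  fix s :: link_structure and sigma2 :: "'e \<Rightarrow> real" and \<alpha> :: real and e f
  assume pos: "\<forall>k. sigma2 k > 0" and a: "\<alpha> > 0"
  obtain \<beta> where b: "\<beta> \<noteq> 0" and B: "link_B s head tail (\<lambda>e. \<alpha> * w e) = \<beta> *\<^sub>R link_B s head tail w"
    using linkB_scale[OF a] by blast
  have c: "\<beta>^2 / \<alpha> > 0" using a b by simp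
  have eq: "\<And>k. nu 0 s head tail (\<lambda>e. \<alpha> * w e) sigma2 k = (\<beta>^2 / \<alpha>) * nu 0 s head tail w sigma2 k"
    unfolding nu_def B lap_scale by (rule centrality_scale[OF lap_sym a pos])
  thus "(nu 0 s head tail (\<lambda>e. \<alpha> * w e) sigma2 e > nu 0 s head tail (\<lambda>e. \<alpha> * w e) sigma2 f
              \<longleftrightarrow> nu 0 s head tail w sigma2 e > nu 0 s head tail w sigma2 f)"
    by (simp only: eq mult_less_cancel_left_pos[OF c])
qed

end
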